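(* Let $C$ be a small category. If there is a non-identity morphism $X\to Y$ in $Sd(C)$, then $\dim(X)<\dim(Y)$, where $\dim$ of a simplex is its dimension $q_X$.
   Context: For $q\ge0$, $[q]=\{0<\dots<q\}$ viewed as a category. A $q$-simplex of the nerve $NC$ is a functor $X:[q]\to C$ (a chain of $q$ composable arrows); $q_X=q$ is its dimension. It is degenerate if $X=Y\circ s$ for a simplex $Y$ and surjective order-preserving $s:[q]\to[p]$ with $p<q$ (equivalently some arrow $X_{i-1}\to X_i$ is an identity), non-degenerate otherwise. $\Delta/C$ has all simplices as objects and as morphisms $X\to Y$ the order-preserving $\xi:[q_X]\to[q_Y]$ with $Y\circ\xi=X$, written $\xi_*$. For a $q$-simplex $X$ and surjective order-preserving $s:[q+1]\to[q]$ with order-preserving right inverses $d,d'$, $d_*,d'_*:X\to X\circ s$ are elementary equivalent; $\sim$ is the smallest equivalence relation on morphisms of $\Delta/C$ compatible with composition containing these pairs; $[\Delta/C]$ is the quotient category; $Sd(C)$ is the full subcategory of $[\Delta/C]$ on the non-degenerate simplices. *)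

theory Defs
  imports Main
begin

record ('o,'a) cat =
  Obj :: "'o set"
  Arr :: "'a set"
  Dom :: "'a \<Rightarrow> 'o"
  Cod :: "'a \<Rightarrow> 'o"
  Id  :: "'o \<Rightarrow> 'a"
  Comp :: "'a \<Rightarrow> 'a \<Rightarrow> 'a"   (* Comp C g f = g o f *)

definition is_category :: "('o,'a) cat \<Rightarrow> bool" where
  "is_category C \<longleftrightarrow>
     (\<forall>f\<in>Arr C. Dom C f \<in> Obj C \<and> Cod C f \<in> Obj C) \<and>
     (\<forall>x\<in>Obj C. Id C x \<in> Arr C \<and> Dom C (Id C x) = x \<and> Cod C (Id C x) = x) \<and>
     (\<forall>f\<in>Arr C. \<forall>g\<in>Arr C. Cod C f = Dom C g \<longrightarrow>
         Comp C g f \<in> Arr C \<and> Dom C (Comp C g f) = Dom C f \<and> Cod C (Comp C g f) = Cod C g) \<and>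
     (\<forall>f\<in>Arr C. Comp C f (Id C (Dom C f)) = f \<and> Comp C (Id C (Cod C f)) f = f) \<and>
     (\<forall>f\<in>Arr C. \<forall>g\<in>Arr C. \<forall>h\<in>Arr C. Cod C f = Dom C g \<longrightarrow> Cod C g = Dom C h \<longrightarrow>
         Comp C h (Comp C g f) = Comp C (Comp C h g) f)"

text \<open>A q-simplex of the nerve: a functor [q] -> C, given as (q, object map, arrow map),
  where the arrow map sends i \<le> j \<le> q to the arrow X(i\<le>j); both maps are extensional
  (undefined outside their domain) so that equality of simplices is equality of functors.\<close>
type_synonym ('o,'a) simplex = "nat \<times> (nat \<Rightarrow> 'o) \<times> (nat \<Rightarrow> nat \<Rightarrow> 'a)"

definition sdim :: "('o,'a) simplex \<Rightarrow> nat" where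
  "sdim X = fst X"

definition is_simplex :: "('o,'a) cat \<Rightarrow> ('o,'a) simplex \<Rightarrow> bool" where
  "is_simplex C X = (case X of (q, ob, F) \<Rightarrow>
     (\<forall>i\<le>q. ob i \<in> Obj C) \<and> (\<forall>i. q < i \<longrightarrow> ob i = undefined) \<and>
     (\<forall>i j. i \<le> j \<and> j \<le> q \<longrightarrow> F i j \<in> Arr C \<and> Dom C (F i j) = ob i \<and> Cod C (F i j) = ob j) \<and>
     (\<forall>i j. \<not> (i \<le> j \<and> j \<le> q) \<longrightarrow> F i j = undefined) \<and>
     (\<forall>i\<le>q. F i i = Id C (ob i)) \<and>
     (\<forall>i j k. i \<le> j \<and> j \<le> k \<and> k \<le> q \<longrightarrow> Comp C (F j k) (F i j) = F i k))"

definition ordmap :: "nat \<Rightarrow> nat \<Rightarrow> (nat \<Rightarrow> nat) \<Rightarrow> bool" where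
  "ordmap q p \<xi> \<longleftrightarrow> (\<forall>i\<le>q. \<xi> i \<le> p) \<and> (\<forall>i j. i \<le> j \<and> j \<le> q \<longrightarrow> \<xi> i \<le> \<xi> j) \<and>
     (\<forall>i. q < i \<longrightarrow> \<xi> i = undefined)"

definition precomp :: "('o,'a) simplex \<Rightarrow> nat \<Rightarrow> (nat \<Rightarrow> nat) \<Rightarrow> ('o,'a) simplex" where
  "precomp Y p \<xi> = (case Y of (q, ob, F) \<Rightarrow>
     (p, \<lambda>i. if i \<le> p then ob (\<xi> i) else undefined,
         \<lambda>i j. if i \<le> j \<and> j \<le> p then F (\<xi> i) (\<xi> j) else undefined))"

definition degenerate :: "('o,'a) cat \<Rightarrow> ('o,'a) simplex \<Rightarrow> bool" where
  "degenerate C X \<longleftrightarrow> (\<exists>Y p s. is_simplex C Y \<and> sdim Y = p \<and> p < sdim X \<and>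
      ordmap (sdim X) p s \<and> s ` {..sdim X} = {..p} \<and> X = precomp Y (sdim X) s)"

definition nondegenerate :: "('o,'a) cat \<Rightarrow> ('o,'a) simplex \<Rightarrow> bool" where
  "nondegenerate C X \<longleftrightarrow> is_simplex C X \<and> \<not> degenerate C X"

text \<open>Morphisms of \<Delta>/C: triples (source, \<xi>, target).\<close>
type_synonym ('o,'a) dcmor = "('o,'a) simplex \<times> (nat \<Rightarrow> nat) \<times> ('o,'a) simplex"

definition dc_mor :: "('o,'a) cat \<Rightarrow> ('o,'a) dcmor \<Rightarrow> bool" where
  "dc_mor C m = (case m of (X, \<xi>, Y) \<Rightarrow>
     is_simplex C X \<and> is_simplex C Y \<and> ordmap (sdim X) (sdim Y) \<xi> \<and> precomp Y (sdim X) \<xi> = X)"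

definition dc_id :: "('o,'a) simplex \<Rightarrow> ('o,'a) dcmor" where
  "dc_id X = (X, \<lambda>i. if i \<le> sdim X then i else undefined, X)"

text \<open>dc_comp g f = g o f (assumes target of f = source of g).\<close>
definition dc_comp :: "('o,'a) dcmor \<Rightarrow> ('o,'a) dcmor \<Rightarrow> ('o,'a) dcmor" where
  "dc_comp g f = (case f of (X, \<xi>, _) \<Rightarrow> case g of (_, \<eta>, Z) \<Rightarrow>
     (X, \<lambda>i. if i \<le> sdim X then \<eta> (\<xi> i) else undefined, Z))"

inductive dc_sim :: "('o,'a) cat \<Rightarrow> ('o,'a) dcmor \<Rightarrow> ('o,'a) dcmor \<Rightarrow> bool" for C where
  elem: "\<lbrakk> is_simplex C X; sdim X = q; ordmap (Suc q) q s; s ` {..Suc q} = {..q};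
           ordmap q (Suc q) d; ordmap q (Suc q) d';
           \<forall>i\<le>q. s (d i) = i; \<forall>i\<le>q. s (d' i) = i \<rbrakk>
         \<Longrightarrow> dc_sim C (X, d, precomp X (Suc q) s) (X, d', precomp X (Suc q) s)"
| refl: "dc_mor C m \<Longrightarrow> dc_sim C m m"
| sym: "dc_sim C m m' \<Longrightarrow> dc_sim C m' m"
| trans: "dc_sim C m m' \<Longrightarrow> dc_sim C m' m'' \<Longrightarrow> dc_sim C m m''"
| comp: "dc_sim C (X, \<xi>, Y) (X', \<xi>', Y') \<Longrightarrow> dc_sim C (Y, \<eta>, Z) (Y', \<eta>', Z')
         \<Longrightarrow> dc_sim C (dc_comp (Y, \<eta>, Z) (X, \<xi>, Y)) (dc_comp (Y', \<eta>', Z') (X', \<xi>', Y'))"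

end

theory Submission
  imports Defs
begin

lemma precomp_simplex:
  assumes "is_simplex C (q, ob, F)" "ordmap p q \<xi>"
  shows "is_simplex C (precomp (q,ob,F) p \<xi>)"
  using assms unfolding is_simplex_def precomp_def ordmap_def
  by (auto simp del: le_refl)

lemma degen:
  assumes cat: "is_category C" and sx: "is_simplex C (q,ob,F)"
    and i: "0<i" "i\<le>q" and idf: "F (i-1) i = Id C (ob i)"
  shows "degenerate C (q,ob,F)"
proof -
  define d where "d = (\<lambda>j. if j \<le> q-1 then (if j < i then j else Suc j) else undefined)"
  define s where "s = (\<lambda>j. if j \<le> q then (if j < i then j else j - 1) else undefined::nat)"
  define Y where "Y = precomp (q,ob,F) (q-1) d"
  have od: "ordmap (q-1) q d" using i unfolding ordmap_def d_def by auto
  have os: "ordmap q (q-1) s" using i unfolding ordmap_def s_def by auto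
  have sY: "is_simplex C Y" unfolding Y_def by (rule precomp_simplex[OF sx od])
  have dY: "sdim Y = q-1" unfolding Y_def precomp_def sdim_def by simp
  have img: "s ` {..q} = {..q-1}"
  proof
    show "s ` {..q} \<subseteq> {..q-1}" using i unfolding s_def by auto
    show "{..q-1} \<subseteq> s ` {..q}"
    proof
      fix j assume j: "j \<in> {..q-1}"
      show "j \<in> s ` {..q}"
      proof (cases "j < i")
        case True then show ?thesis using i j unfolding s_def by (intro image_eqI[of _ _ j]) auto
      next
        case False then show ?thesis using i j unfolding s_def by (intro image_eqI[of _ _ "Suc j"]) auto
      qed
    qed
  qed
  have obs: "\<forall>k\<le>q. ob k \<in> Obj C" and obu: "\<forall>k. q < k \<longrightarrow> ob k = undefined"
    and Fa: "\<forall>a b. a \<le> b \<and> b \<le> q \<longrightarrow> F a b \<in> Arr C \<and> Dom C (F a b) = ob a \<and> Cod C (F a b) = ob b"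
    and Fu: "\<forall>a b. \<not> (a \<le> b \<and> b \<le> q) \<longrightarrow> F a b = undefined"
    and Fid: "\<forall>a\<le>q. F a a = Id C (ob a)"
    and Fc: "\<forall>a b c. a \<le> b \<and> b \<le> c \<and> c \<le> q \<longrightarrow> Comp C (F b c) (F a b) = F a c"
    using sx unfolding is_simplex_def by auto
  have catI: "\<forall>x\<in>Obj C. Id C x \<in> Arr C \<and> Dom C (Id C x) = x \<and> Cod C (Id C x) = x"
    and catL: "\<forall>f\<in>Arr C. Comp C f (Id C (Dom C f)) = f \<and> Comp C (Id C (Cod C f)) f = f"
    using cat unfolding is_category_def by auto
  have obeq: "ob (i-1) = ob i"
  proof -
    have "Dom C (F (i-1) i) = ob (i-1)" using Fa i by auto
    moreover have "Dom C (Id C (ob i)) = ob i" using catI obs i by auto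
    ultimately show ?thesis using idf by simp
  qed
  have ds: "\<And>a. a \<le> q \<Longrightarrow> d (s a) = (if a = i then i - 1 else a)"
    using i unfolding d_def s_def by auto
  have sle: "\<And>a. a \<le> q \<Longrightarrow> s a \<le> q - 1" using os unfolding ordmap_def by auto
  have smono: "\<And>a b. a \<le> b \<Longrightarrow> b \<le> q \<Longrightarrow> s a \<le> s b" using os unfolding ordmap_def by auto
  have obeq2: "\<And>a. a \<le> q \<Longrightarrow> ob (d (s a)) = ob a" using ds obeq by auto
  have Feq: "F (d (s a)) (d (s b)) = F a b" if ab: "a \<le> b" "b \<le> q" for a b
  proof (cases "a = i")
    case ai: True
    show ?thesis
    proof (cases "b = i")
      case True
      then show ?thesis using ai ds[of i] i Fid obeq by auto
    next
      case False
      then have bi: "b > i" using ai ab by auto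
      have "F (i-1) b = Comp C (F i b) (F (i-1) i)" using Fc[rule_format, of "i-1" i b] i ab ai by auto
      also have "\<dots> = Comp C (F i b) (Id C (Dom C (F i b)))" using idf Fa ab ai by auto
      also have "\<dots> = F i b" using catL Fa[rule_format, of i b] ab ai by auto
      finally show ?thesis using ai ds[of i] ds[of b] ab i False by auto
    qed
  next
    case ani: False
    show ?thesis
    proof (cases "b = i")
      case True
      then have ai: "a < i" using ani ab by auto
      have "F a i = Comp C (F (i-1) i) (F a (i-1))" using Fc[rule_format, of a "i-1" i] i ai by auto
      also have "\<dots> = Comp C (Id C (Cod C (F a (i-1)))) (F a (i-1))"
        using idf Fa[rule_format, of a "i-1"] ai i obeq \<open>a < i\<close>
        by (subgoal_tac "a \<le> i - 1") auto
      also have "\<dots> = F a (i-1)" proof -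
        have ai': "a \<le> i - 1" using ai by linarith
        have "F a (i-1) \<in> Arr C" using Fa[rule_format, of a "i-1"] ai' i by auto
        then show ?thesis using catL by blast
      qed
      finally show ?thesis using ds[of a] ds[of b] ab ani True by auto
    next
      case False
      then show ?thesis using ds[of a] ds[of b] ab ani by auto
    qed
  qed
  have eq: "(q, ob, F) = precomp Y q s"
    unfolding Y_def precomp_def
    using sle smono obeq2 Feq obu Fu
    by (auto intro!: ext simp: not_le)
  have sd: "sdim (q,ob,F) = q" by (simp add: sdim_def)
  have lt: "q - 1 < q" using i by simp
  show ?thesis unfolding degenerate_def sd
    using sY dY lt img os eq by blast
qed

theorem lemma19:
  fixes C :: "('o,'a) cat" and X Y :: "('o,'a) simplex" and \<xi> :: "nat \<Rightarrow> nat"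
  assumes "is_category C"
    and "nondegenerate C X" and "nondegenerate C Y"
    and "dc_mor C (X, \<xi>, Y)"
    and "\<not> (X = Y \<and> dc_sim C (X, \<xi>, Y) (dc_id X))"
  shows "sdim X < sdim Y"
proof -
  obtain q obX FX where X: "X = (q, obX, FX)" by (cases X) auto
  obtain p obY FY where Y: "Y = (p, obY, FY)" by (cases Y) auto
  have sx: "is_simplex C X" and sy: "is_simplex C Y" and om: "ordmap q p \<xi>"
    and pc: "precomp Y q \<xi> = X"
    using assms(4) unfolding dc_mor_def X Y sdim_def by auto
  have ndX: "\<not> degenerate C (q, obX, FX)" using assms(2) X unfolding nondegenerate_def by auto
  have obXe: "obX = (\<lambda>i. if i \<le> q then obY (\<xi> i) else undefined)"
    using pc unfolding X Y precomp_def by auto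
  have obX: "\<And>i. i \<le> q \<Longrightarrow> obX i = obY (\<xi> i)" using obXe by simp
  have FX: "\<And>i j. i \<le> j \<Longrightarrow> j \<le> q \<Longrightarrow> FX i j = FY (\<xi> i) (\<xi> j)"
  proof -
    fix i j assume "i \<le> j" "j \<le> q"
    have "FX = (\<lambda>i j. if i \<le> j \<and> j \<le> q then FY (\<xi> i) (\<xi> j) else undefined)"
      using pc unfolding X Y precomp_def by auto
    then show "FX i j = FY (\<xi> i) (\<xi> j)" using \<open>i \<le> j\<close> \<open>j \<le> q\<close> by simp
  qed
  have ole: "\<And>i. i \<le> q \<Longrightarrow> \<xi> i \<le> p" and omono: "\<And>i j. i \<le> j \<Longrightarrow> j \<le> q \<Longrightarrow> \<xi> i \<le> \<xi> j"
    and ound: "\<And>i. q < i \<Longrightarrow> \<xi> i = undefined"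
    using om unfolding ordmap_def by auto
  have FYid: "\<And>k. k \<le> p \<Longrightarrow> FY k k = Id C (obY k)" using sy unfolding Y is_simplex_def by auto
  have strict: "\<xi> (i-1) < \<xi> i" if i: "0 < i" "i \<le> q" for i
  proof (rule ccontr)
    assume "\<not> \<xi> (i-1) < \<xi> i"
    then have e: "\<xi> (i-1) = \<xi> i" using omono[of "i-1" i] i by auto
    have "FX (i-1) i = FY (\<xi> i) (\<xi> i)" using FX[of "i-1" i] i e by auto
    also have "\<dots> = Id C (obX i)" using FYid[of "\<xi> i"] ole[of i] obX[of i] i by auto
    finally have "degenerate C (q, obX, FX)"
      using degen[OF assms(1) sx[unfolded X] i] by auto
    then show False using ndX by auto
  qed
  have low: "i \<le> \<xi> i" if "i \<le> q" for i
    using that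
  proof (induction i)
    case 0 then show ?case by simp
  next
    case (Suc i) then show ?case using strict[of "Suc i"] by auto
  qed
  have high: "\<xi> (q - k) + k \<le> \<xi> q" if "k \<le> q" for k
    using that
  proof (induction k)
    case 0 then show ?case by simp
  next
    case (Suc k)
    have "\<xi> (q - Suc k) < \<xi> (q - k)" using strict[of "q - k"] Suc.prems
      proof -
      have "q - Suc k = q - k - 1" by simp
      moreover have "0 < q - k" "q - k \<le> q" using Suc.prems by auto
      ultimately show ?thesis using strict[of "q - k"] by simp
    qed
    then show ?case using Suc by auto
  qed
  have qp: "q \<le> p" using low[of q] ole[of q] by auto
  show ?thesis
  proof (rule ccontr)
    assume "\<not> sdim X < sdim Y"
    then have qp': "q = p" using qp unfolding X Y sdim_def by auto
    have xid: "\<And>i. i \<le> q \<Longrightarrow> \<xi> i = i"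
    proof -
      fix i assume iq: "i \<le> q"
      have "\<xi> i + (q - i) \<le> \<xi> q" using high[of "q - i"] iq by auto
      then show "\<xi> i = i" using ole[of q] qp' low[of i] iq by auto
    qed
    have xi: "\<xi> = (\<lambda>i. if i \<le> sdim X then i else undefined)"
      using xid ound unfolding X sdim_def by (auto intro!: ext simp: not_le)
    have obu: "\<And>i. p < i \<Longrightarrow> obY i = undefined"
      and Fu: "\<And>i j. \<not> (i \<le> j \<and> j \<le> p) \<Longrightarrow> FY i j = undefined"
      using sy unfolding Y is_simplex_def by auto
    have e1: "(\<lambda>i. if i \<le> q then obY (\<xi> i) else undefined) = obY"
    proof
      fix i show "(if i \<le> q then obY (\<xi> i) else undefined) = obY i"
        using xid[of i] obu[of i] qp' by (cases "i \<le> q") auto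
    qed
    have e2: "(\<lambda>i j. if i \<le> j \<and> j \<le> q then FY (\<xi> i) (\<xi> j) else undefined) = FY"
    proof (intro ext)
      fix i j show "(if i \<le> j \<and> j \<le> q then FY (\<xi> i) (\<xi> j) else undefined) = FY i j"
        using xid[of i] xid[of j] Fu[of i j] qp' by (cases "i \<le> j \<and> j \<le> q") auto
    qed
    have "precomp Y q \<xi> = Y" unfolding Y precomp_def using qp' e1 e2 by simp
    then have "X = Y" using pc by simp
    moreover have "dc_sim C (X, \<xi>, Y) (dc_id X)"
      using dc_sim.refl[OF assms(4)] \<open>X = Y\<close> xi unfolding dc_id_def by simp
    ultimately show False using assms(5) by blast
  qed
qed

end
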